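(* Let $(V,\mathrm{dist})$ be a metric space in which every nonzero distance lies in $[1,\Delta]$, let $P$ be a stream (sequence) of $n$ points of $V$, and let $\epsilon\in(0,1/4)$. Define $f$ on finite multisets $S$ of points by $f(S):=\mathrm{MaxCut}(S)+|S|\cdot\epsilon/n$. Then $f$ is $(\epsilon,\tfrac{1}{64}\epsilon)$-smooth.
   Context: Multisets/sequences of points: for $S,T$, $\mathrm{cut}(S,T):=\sum_{x\in S}\sum_{y\in T}\mathrm{dist}(x,y)$ and $\mathrm{MaxCut}(S):=\max_{T\subseteq S}\mathrm{cut}(T,S\setminus T)$. For sequences $A,B$, $B\subseteq_r A$ means $B$ is a prefix of $A$ (in the stream order). A function $f$ is $(\alpha,\beta)$-smooth if for every $A$ (a contiguous portion of the stream): (1) $f(A)\ge0$; (2) $f(A)\ge f(B)$ whenever $B\subseteq_r A$; (3) $f(A)\le\mathrm{poly}(|A|)\cdot\Delta$; (4) $0<\beta\le\alpha<1$, and whenever $B\subseteq_r A$ and $(1-\beta)f(A)\le f(B)$, then $(1-\alpha)f(A\cup C)\le f(B\cup C)$ for every $C\subseteq V$. *)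

theory Defs
  imports Complex_Main "HOL-Library.Multiset" "HOL-Library.Sublist"
    "HOL-Computational_Algebra.Polynomial"
begin

definition cut :: "'a::metric_space multiset \<Rightarrow> 'a multiset \<Rightarrow> real" where
  "cut S T = (\<Sum>x\<in>#S. \<Sum>y\<in>#T. dist x y)"

definition MaxCut :: "'a::metric_space multiset \<Rightarrow> real" where
  "MaxCut S = Max {cut T (S - T) | T. T \<subseteq># S}"

definition fcut :: "real \<Rightarrow> nat \<Rightarrow> 'a::metric_space multiset \<Rightarrow> real" where
  "fcut eps n S = MaxCut S + real (size S) * eps / real n"

text \<open>Contiguous portions of the stream are the sublists (infixes) of P; B \<subseteq>_r A is
  'prefix B A'; A \<union> C is multiset union.\<close>
definition smooth ::
  "('a multiset \<Rightarrow> real) \<Rightarrow> 'a list \<Rightarrow> real \<Rightarrow> real \<Rightarrow> real \<Rightarrow> bool" where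
  "smooth f P Delta \<alpha> \<beta> \<longleftrightarrow>
     (\<forall>A. sublist A P \<longrightarrow> 0 \<le> f (mset A)) \<and>
     (\<forall>A B. sublist A P \<longrightarrow> prefix B A \<longrightarrow> f (mset B) \<le> f (mset A)) \<and>
     (\<exists>p :: real poly. \<forall>A. sublist A P \<longrightarrow> f (mset A) \<le> poly p (real (length A)) * Delta) \<and>
     0 < \<beta> \<and> \<beta> \<le> \<alpha> \<and> \<alpha> < 1 \<and>
     (\<forall>A B C. sublist A P \<longrightarrow> prefix B A \<longrightarrow> (1 - \<beta>) * f (mset A) \<le> f (mset B) \<longrightarrow>
        (1 - \<alpha>) * f (mset A + C) \<le> f (mset B + C))"

end

theory Submission
  imports Defs
begin

lemma cut_add_left: "cut (A + B) C = cut A C + cut B C"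
  by (simp add: cut_def)
lemma cut_add_right: "cut A (B + C) = cut A B + cut A C"
  by (simp add: cut_def sum_mset.distrib)
lemma cut_empty[simp]: "cut {#} C = 0" "cut A {#} = 0"
  by (simp_all add: cut_def)
lemma cut_comm: "cut A B = cut B A"
  unfolding cut_def by (subst sum_mset.swap) (simp add: dist_commute)
lemma summ_nonneg: "(\<And>x. x \<in># M \<Longrightarrow> (0::real) \<le> f x) \<Longrightarrow> 0 \<le> (\<Sum>x\<in>#M. f x)"
  by (induction M) auto
lemma cut_nonneg: "0 \<le> cut A B"
  unfolding cut_def by (intro summ_nonneg) auto
lemma cut_mono_left: "A \<subseteq># A' \<Longrightarrow> cut A C \<le> cut A' C"
  by (metis cut_add_left cut_nonneg le_add_same_cancel1 subset_mset.add_diff_inverse)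
lemma cut_mono_right: "B \<subseteq># B' \<Longrightarrow> cut A B \<le> cut A B'"
  by (metis cut_comm cut_mono_left)

lemma finite_submsets: "finite {T. T \<subseteq># (S::'a multiset)}"
proof -
  have "{T. T \<subseteq># S} \<subseteq> mset ` {ys. set ys \<subseteq> set_mset S \<and> length ys \<le> size S}"
  proof
    fix T assume "T \<in> {T. T \<subseteq># S}"
    hence T: "T \<subseteq># S" by simp
    obtain ys where ys: "mset ys = T" using ex_mset by blast
    have "set ys \<subseteq> set_mset S" using T ys by (metis mset_subset_eqD set_mset_mset subsetI)
    moreover have "length ys \<le> size S" using T ys by (metis size_mset size_mset_mono)
    ultimately show "T \<in> mset ` {ys. set ys \<subseteq> set_mset S \<and> length ys \<le> size S}" using ys by blast
  qed
  moreover have "finite {ys. set ys \<subseteq> set_mset S \<and> length ys \<le> size S}"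
    using finite_lists_length_le by blast
  ultimately show ?thesis by (rule finite_subset[OF _ finite_imageI])
qed

lemma MaxCut_ge: "T \<subseteq># S \<Longrightarrow> cut T (S - T) \<le> MaxCut S"
  unfolding MaxCut_def
  by (rule Max_ge) (auto intro: finite_image_set finite_submsets[THEN finite_image_set[where f="\<lambda>T. cut T (S - T)"]])

lemma MaxCut_obtain: obtains T where "T \<subseteq># S" "MaxCut S = cut T (S - T)"
proof -
  have fin: "finite {cut T (S - T) | T. T \<subseteq># S}"
    using finite_submsets[THEN finite_image_set[where f="\<lambda>T. cut T (S - T)"]] by simp
  have "cut {#} (S - {#}) \<in> {cut T (S - T) | T. T \<subseteq># S}" by (rule CollectI, rule exI[of _ "{#}"]) simp
  hence ne: "{cut T (S - T) | T. T \<subseteq># S} \<noteq> {}" by (rule ex_in_conv[THEN iffD1, OF exI])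
  have "Max {cut T (S - T) | T. T \<subseteq># S} \<in> {cut T (S - T) | T. T \<subseteq># S}" by (rule Max_in[OF fin ne])
  then obtain T where "T \<subseteq># S" "Max {cut T (S - T) | T. T \<subseteq># S} = cut T (S - T)" by auto
  thus ?thesis using that unfolding MaxCut_def by simp
qed

lemma MaxCut_nonneg: "0 \<le> MaxCut S"
  using MaxCut_ge[of "{#}" S] by simp

lemma MaxCut_le_half: "MaxCut S \<le> cut S S / 2"
proof -
  obtain T where T: "T \<subseteq># S" "MaxCut S = cut T (S - T)" by (rule MaxCut_obtain)
  define U where "U = S - T"
  have S: "S = T + U" using T unfolding U_def by simp
  have "cut S S = cut T T + cut T U + cut U T + cut U U"
    unfolding S by (simp add: cut_add_left cut_add_right)
  moreover have "cut U T = cut T U" by (rule cut_comm)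
  moreover have "MaxCut S = cut T U" using T U_def by simp
  ultimately show ?thesis using cut_nonneg[of T T] cut_nonneg[of U U] by linarith
qed

lemma MaxCut_super: "MaxCut S + MaxCut X + cut S X / 2 \<le> MaxCut (S + X)"
proof -
  obtain T1 where T1: "T1 \<subseteq># S" "MaxCut S = cut T1 (S - T1)" by (rule MaxCut_obtain)
  obtain T2 where T2: "T2 \<subseteq># X" "MaxCut X = cut T2 (X - T2)" by (rule MaxCut_obtain)
  define U1 where "U1 = S - T1"
  define U2 where "U2 = X - T2"
  have S: "S = T1 + U1" using T1 unfolding U1_def by simp
  have X: "X = T2 + U2" using T2 unfolding U2_def by simp
  have c1: "cut (T1 + T2) (U1 + U2) \<le> MaxCut (S + X)"
  proof -
    have "T1 + T2 \<subseteq># S + X" using S X by simp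
    moreover have E: "S + X - (T1 + T2) = U1 + U2"
    proof -
      have "S + X = (T1 + T2) + (U1 + U2)" using S X by (simp add: add_ac)
      thus ?thesis by simp
    qed
    ultimately show ?thesis using MaxCut_ge[of _ "S + X"] E by metis
  qed
  have c2: "cut (T1 + U2) (U1 + T2) \<le> MaxCut (S + X)"
  proof -
    have "T1 + U2 \<subseteq># S + X" using S X by simp
    moreover have E: "S + X - (T1 + U2) = U1 + T2"
    proof -
      have "S + X = (T1 + U2) + (U1 + T2)" using S X by (simp add: add_ac)
      thus ?thesis by simp
    qed
    ultimately show ?thesis using MaxCut_ge[of _ "S + X"] E by metis
  qed
  have "cut S X = cut T1 T2 + cut T1 U2 + cut U1 T2 + cut U1 U2"
    unfolding S X by (simp add: cut_add_left cut_add_right)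
  moreover have "cut (T1 + T2) (U1 + U2) = cut T1 U1 + cut T1 U2 + cut T2 U1 + cut T2 U2"
    by (simp add: cut_add_left cut_add_right)
  moreover have "cut (T1 + U2) (U1 + T2) = cut T1 U1 + cut T1 T2 + cut U2 U1 + cut U2 T2"
    by (simp add: cut_add_left cut_add_right)
  moreover have "cut T2 U1 = cut U1 T2" "cut U2 U1 = cut U1 U2" "cut U2 T2 = cut T2 U2"
    by (simp_all add: cut_comm)
  moreover have "MaxCut S = cut T1 U1" "MaxCut X = cut T2 U2" using T1 T2 U1_def U2_def by simp_all
  ultimately show ?thesis using c1 c2 by linarith
qed

lemma MaxCut_sub: "MaxCut (S + X) \<le> MaxCut S + MaxCut X + cut S X"
proof -
  obtain T where T: "T \<subseteq># S + X" "MaxCut (S + X) = cut T (S + X - T)" by (rule MaxCut_obtain)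
  define T1 where "T1 = T \<inter># S"
  define T2 where "T2 = T - T1"
  have T1S: "T1 \<subseteq># S" unfolding T1_def by simp
  have T2X: "T2 \<subseteq># X" using T unfolding T2_def T1_def subseteq_mset_def
    by (simp add: subseteq_mset_def) (metis add.commute le_diff_conv)
  have TT: "T = T1 + T2" unfolding T2_def T1_def by (auto simp: multiset_eq_iff min_def)
  define U1 where "U1 = S - T1"
  define U2 where "U2 = X - T2"
  have S: "S = T1 + U1" using T1S unfolding U1_def by simp
  have X: "X = T2 + U2" using T2X unfolding U2_def by simp
  have R: "S + X - T = U1 + U2"
  proof -
    have "S + X = (T1 + T2) + (U1 + U2)" using S X by (simp add: add_ac)
    thus ?thesis unfolding TT by simp
  qed
  have "cut T (S + X - T) = cut T1 U1 + cut T2 U2 + (cut T1 U2 + cut T2 U1)"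
    unfolding TT by (simp add: R[unfolded TT] cut_add_left cut_add_right)
  moreover have "cut T1 U1 \<le> MaxCut S" using MaxCut_ge[OF T1S] unfolding U1_def .
  moreover have "cut T2 U2 \<le> MaxCut X" using MaxCut_ge[OF T2X] unfolding U2_def .
  moreover have "cut S X = cut T1 T2 + cut T1 U2 + cut U1 T2 + cut U1 U2"
    unfolding S X by (simp add: cut_add_left cut_add_right)
  moreover have "cut T2 U1 = cut U1 T2" by (simp add: cut_comm)
  ultimately show ?thesis using T cut_nonneg[of T1 T2] cut_nonneg[of U1 U2] by linarith
qed

lemma cut_triangle:
  "real (size Y) * cut X Z \<le> real (size Z) * cut X Y + real (size X) * cut Y Z"
proof -
  have "real (size Y) * cut X Z = (\<Sum>y\<in>#Y. \<Sum>x\<in>#X. \<Sum>z\<in>#Z. dist x z)"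
    unfolding cut_def by simp
  also have "\<dots> \<le> (\<Sum>y\<in>#Y. \<Sum>x\<in>#X. \<Sum>z\<in>#Z. dist y x + dist y z)"
    by (intro sum_mset_mono) (metis dist_commute dist_triangle)
  also have "\<dots> = (\<Sum>y\<in>#Y. \<Sum>x\<in>#X. real (size Z) * dist y x) + (\<Sum>y\<in>#Y. real (size X) * (\<Sum>z\<in>#Z. dist y z))"
    by (simp add: sum_mset.distrib)
  also have "\<dots> = real (size Z) * cut Y X + real (size X) * cut Y Z"
    unfolding cut_def by (simp add: sum_mset_distrib_left)
  finally show ?thesis by (simp add: cut_comm)
qed


lemma core:
  fixes b eps e gA gB gD gAC gBC cBD cDC cBB cBC cAC cAA nb nd nc :: real
  assumes b: "b = eps/64" and eps: "0 < eps" "eps < 1/4" and e: "0 < e"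
    and nn: "0 \<le> nb" "0 \<le> nd" "0 \<le> nc" "1 \<le> nb + nd"
    and pos: "0 \<le> gD" "0 \<le> cBD" "0 \<le> cDC" "0 \<le> cBC" "0 \<le> cAC" "0 \<le> cBB" "0 \<le> gA" "0 \<le> gB"
    and F1: "gB + gD + cBD/2 \<le> gA"
    and F2: "gAC \<le> gBC + gD + cBD + cDC"
    and F3: "gB \<le> cBB/2"
    and F4: "nd*cBB \<le> 2*nb*cBD"
    and F5: "nb*cDC \<le> nc*cBD + nd*cBC"
    and F6: "cBC/2 \<le> gBC"
    and F7: "cAC/2 \<le> gAC"
    and F8: "nc*cAA \<le> 2*(nb+nd)*cAC"
    and F9: "gA \<le> cAA/2"
    and F10: "gA \<le> gAC" "gBC \<le> gAC"
    and H: "(1-b)*(gA + (nb+nd)*e) \<le> gB + nb*e"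
  shows "(1-eps)*(gAC + (nb+nd+nc)*e) \<le> gBC + (nb+nc)*e"
proof -
  define hA where "hA = gA + (nb+nd)*e"
  define hB where "hB = gB + nb*e"
  define hAC where "hAC = gAC + (nb+nd+nc)*e"
  define hBC where "hBC = gBC + (nb+nc)*e"
  define d where "d = hA - hB"
  have b0: "0 < b" "b < 1/256" using b eps by auto
  have "1*e \<le> (nb+nd)*e" by (rule mult_right_mono) (use nn e in auto)
  hence "e \<le> (nb+nd)*e" by simp
  hence hApos: "0 < hA" unfolding hA_def using pos(7) e by linarith
  have S0: "d \<le> b*hA" using H unfolding d_def hA_def hB_def by (simp add: algebra_simps)
  have nde: "0 \<le> nd*e" using nn e by simp
  have nbe: "0 \<le> nb*e" using nn e by simp
  have S1: "cBD + 2*(nd*e) \<le> 2*d" using F1 pos unfolding d_def hA_def hB_def by (simp add: algebra_simps)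
  have S1': "gD + cBD/2 + nd*e \<le> d" using F1 pos unfolding d_def hA_def hB_def by (simp add: algebra_simps)
  have S2: "hAC - hBC \<le> 2*d + cDC" using F2 S1' pos nde unfolding d_def hA_def hB_def hAC_def hBC_def
    by (simp add: algebra_simps)
  have S3: "nd*hB \<le> 2*nb*d"
  proof -
    have "nd*gB \<le> nd*(cBB/2)" using F3 nn by (intro mult_left_mono) auto
    also have "\<dots> \<le> nb*cBD" using F4 by simp
    finally have "nd*hB \<le> nb*(cBD + nd*e)" unfolding hB_def by (simp add: algebra_simps)
    also have "\<dots> \<le> nb*(2*d)" using S1 nde nn by (intro mult_left_mono) auto
    finally show ?thesis by simp
  qed
  have hBge: "(1-b)*hA \<le> hB" using H unfolding hA_def hB_def .
  have S4: "nd \<le> 3*b*nb"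
  proof -
    have "nd*((1-b)*hA) \<le> nd*hB" using hBge nn by (intro mult_left_mono) auto
    also have "\<dots> \<le> 2*nb*d" using S3 .
    also have "\<dots> \<le> 2*nb*(b*hA)" using S0 nn by (intro mult_left_mono) auto
    finally have "(nd*(1-b))*hA \<le> (2*nb*b)*hA" by (simp add: algebra_simps)
    hence A: "nd*(1-b) \<le> 2*nb*b" using hApos by simp
    have M: "(nb*b)*2 \<le> (nb*b)*(3*(1-b))" using b0 nn
      by (intro mult_left_mono) auto
    have "(nb*b)*2 = 2*nb*b" "(nb*b)*(3*(1-b)) = 3*b*nb*(1-b)" by (simp_all add: algebra_simps)
    have E: "2*nb*b \<le> 3*b*nb*(1-b)" using M by (simp add: algebra_simps)
    have "nd*(1-b) \<le> (3*b*nb)*(1-b)" by (rule order_trans[OF A E])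
    thus ?thesis using b0 by simp
  qed
  have nbpos: "0 < nb"
  proof (rule ccontr)
    assume "\<not> 0 < nb" hence nb0: "nb = 0" using nn by simp
    hence "nd*hB \<le> 0" using S3 by simp
    moreover have "1 \<le> nd" using nn nb0 by simp
    ultimately have "hB \<le> 0" by (auto simp: mult_le_0_iff)
    moreover have "0 < (1-b)*hA" using b0 hApos by simp
    ultimately show False using hBge by simp
  qed
  have "(nb+nd)*e \<le> (nb+nd+nc)*e" by (rule mult_right_mono) (use nn e in auto)
  hence hAle: "hA \<le> hAC" unfolding hA_def hAC_def using F10 by linarith
  have S5: "nc*hA \<le> 2*(nb+nd)*hAC"
  proof -
    have "nc*gA \<le> nc*(cAA/2)" using F9 nn by (intro mult_left_mono) auto
    also have "\<dots> \<le> (nb+nd)*cAC" using F8 by (simp add: algebra_simps)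
    also have "\<dots> \<le> (nb+nd)*(2*gAC)" using F7 nn by (intro mult_left_mono) auto
    finally have "nc*hA \<le> (nb+nd)*(2*gAC) + nc*(nb+nd)*e" unfolding hA_def by (simp add: algebra_simps)
    also have "\<dots> \<le> 2*(nb+nd)*hAC" unfolding hAC_def using nn e
      by (simp add: algebra_simps mult_nonneg_nonneg)
    finally show ?thesis .
  qed
  have "0 \<le> (nb+nd+nc)*e" using nn e by simp
  hence hACge: "gBC \<le> hAC" unfolding hAC_def using F10 by linarith
  have S6: "nb*cDC \<le> nb*(11*b*hAC)"
  proof -
    have "nc*cBD \<le> nc*(2*b*hA)" using S1 S0 nde nn by (intro mult_left_mono) auto
    also have "\<dots> = 2*b*(nc*hA)" by simp
    also have "\<dots> \<le> 2*b*(2*(nb+nd)*hAC)" using S5 b0 by (intro mult_left_mono) auto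
    finally have t1: "nc*cBD \<le> 4*b*(nb+nd)*hAC" by (simp add: algebra_simps)
    have "nd*cBC \<le> nd*(2*hAC)" using F6 hACge nn by (intro mult_left_mono) auto
    hence t2: "nd*cBC \<le> 2*nd*hAC" by simp
    have hACpos: "0 \<le> hAC" using hAle hApos by simp
    have "4*b*(nb+nd)*hAC + 2*nd*hAC = (4*b*nb + (4*b+2)*nd)*hAC" by (simp add: algebra_simps)
    also have "\<dots> \<le> (4*b*nb + (4*b+2)*(3*b*nb))*hAC"
      using S4 b0 hACpos by (intro mult_right_mono add_left_mono mult_left_mono) auto
    also have "\<dots> \<le> (11*b*nb)*hAC"
    proof (intro mult_right_mono hACpos)
      have "(4*b+2)*(3*b*nb) \<le> 7*b*nb"
      proof -
        have "(4*b+2)*(3*b*nb) = (12*b+6)*(b*nb)" by (simp add: algebra_simps)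
        also have "\<dots> \<le> 7*(b*nb)" using b0 nn by (intro mult_right_mono) auto
        finally show ?thesis by simp
      qed
      thus "4*b*nb + (4*b+2)*(3*b*nb) \<le> 11*b*nb" by simp
    qed
    finally show ?thesis using F5 t1 t2 by (simp add: algebra_simps)
  qed
  have S7: "cDC \<le> 11*b*hAC" using S6 nbpos by simp
  have "b*hA \<le> b*hAC" using hAle b0 by (intro mult_left_mono) auto
  hence "hAC - hBC \<le> 13*b*hAC" using S2 S0 S7 by simp
  also have "\<dots> \<le> eps*hAC" using b b0 hAle hApos by simp
  finally have "(1-eps)*hAC \<le> hBC" by (simp add: algebra_simps)
  thus ?thesis unfolding hAC_def hBC_def .
qed


lemma MaxCut_mono_add: "MaxCut S \<le> MaxCut (S + X)"
  using MaxCut_super[of S X] MaxCut_nonneg[of X] cut_nonneg[of S X] by linarith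

lemma cut_le_bound:
  fixes S T :: "'a::metric_space multiset"
  assumes "\<And>x y :: 'a::metric_space. dist x y \<le> Delta"
  shows "cut S T \<le> real (size S) * (real (size T) * Delta)"
proof -
  have "cut S T \<le> (\<Sum>x\<in>#S. \<Sum>y\<in>#T. Delta)"
    unfolding cut_def by (intro sum_mset_mono) (use assms in auto)
  thus ?thesis by simp
qed

theorem lemma4p4:
  fixes P :: "'a::metric_space list" and n :: nat and \<epsilon> Delta :: real
  assumes dist_range: "\<And>x y :: 'a. x \<noteq> y \<Longrightarrow> 1 \<le> dist x y \<and> dist x y \<le> Delta"
    and Delta_ge: "1 \<le> Delta"
    and len: "length P = n"
    and eps: "0 < \<epsilon>" "\<epsilon> < 1/4"
  shows "smooth (fcut \<epsilon> n) P Delta \<epsilon> (\<epsilon> / 64)"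
proof -
  define e where "e = \<epsilon> / real n"
  have e0: "0 \<le> e" unfolding e_def using eps by simp
  have fc: "\<And>S. fcut \<epsilon> n S = MaxCut S + real (size S) * e"
    by (simp add: fcut_def e_def)
  have fnn: "0 \<le> fcut \<epsilon> n S" for S
  proof -
    have "0 \<le> real (size S) * e" using e0 by simp
    thus ?thesis using MaxCut_nonneg[of S] by (simp add: fc)
  qed
  have slen: "\<And>A. sublist A P \<Longrightarrow> length A \<le> n" using len sublist_length_le by blast
  have dle: "\<And>x y :: 'a. dist x y \<le> Delta"
    using dist_range Delta_ge by (metis dist_self order_trans zero_le_one)
  have c1: "\<forall>A. sublist A P \<longrightarrow> 0 \<le> fcut \<epsilon> n (mset A)" using fnn by blast
  have c2: "\<forall>A B. sublist A P \<longrightarrow> prefix B A \<longrightarrow> fcut \<epsilon> n (mset B) \<le> fcut \<epsilon> n (mset A)"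
  proof (intro allI impI)
    fix A B :: "'a list" assume "sublist A P" "prefix B A"
    then obtain zs where A: "A = B @ zs" by (auto elim: prefixE)
    have "real (size (mset B)) * e \<le> real (size (mset B + mset zs)) * e"
      using e0 by (intro mult_right_mono) auto
    thus "fcut \<epsilon> n (mset B) \<le> fcut \<epsilon> n (mset A)"
      unfolding fc A using MaxCut_mono_add[of "mset B" "mset zs"] by simp
  qed
  have c3: "\<exists>p :: real poly. \<forall>A. sublist A P \<longrightarrow> fcut \<epsilon> n (mset A) \<le> poly p (real (length A)) * Delta"
  proof (intro exI allI impI)
    fix A assume sA: "sublist A P"
    define m where "m = real (length A)"
    have "MaxCut (mset A) \<le> cut (mset A) (mset A) / 2" by (rule MaxCut_le_half)
    also have "\<dots> \<le> m * (m * Delta) / 2" using cut_le_bound[OF dle, of "mset A" "mset A"] unfolding m_def by simp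
    also have "\<dots> \<le> m * m * Delta" using Delta_ge unfolding m_def by simp
    finally have g: "MaxCut (mset A) \<le> m * m * Delta" .
    have "real (size (mset A)) * e \<le> Delta"
    proof (cases "n = 0")
      case True thus ?thesis using Delta_ge by (simp add: e_def)
    next
      case False
      have "real (length A) \<le> real n" using slen[OF sA] by simp
      hence "real (length A) / real n \<le> 1" using False by simp
      hence "real (length A) / real n * \<epsilon> \<le> 1 * \<epsilon>" using eps by (intro mult_right_mono) auto
      thus ?thesis using eps Delta_ge by (simp add: e_def)
    qed
    hence "fcut \<epsilon> n (mset A) \<le> m * m * Delta + Delta" using g unfolding fc by simp
    also have "\<dots> = poly [:1, 0, 1:] m * Delta" by (simp add: algebra_simps)
    finally show "fcut \<epsilon> n (mset A) \<le> poly [:1, 0, 1:] (real (length A)) * Delta" unfolding m_def .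
  qed
  have c7: "\<forall>A B C. sublist A P \<longrightarrow> prefix B A \<longrightarrow> (1 - \<epsilon>/64) * fcut \<epsilon> n (mset A) \<le> fcut \<epsilon> n (mset B) \<longrightarrow>
        (1 - \<epsilon>) * fcut \<epsilon> n (mset A + C) \<le> fcut \<epsilon> n (mset B + C)"
  proof (intro allI impI)
    fix A B :: "'a list" and C :: "'a multiset"
    assume sA: "sublist A P" and pB: "prefix B A"
      and H0: "(1 - \<epsilon>/64) * fcut \<epsilon> n (mset A) \<le> fcut \<epsilon> n (mset B)"
    obtain D where A: "A = B @ D" using pB by (auto elim: prefixE)
    show "(1 - \<epsilon>) * fcut \<epsilon> n (mset A + C) \<le> fcut \<epsilon> n (mset B + C)"
    proof (cases "D = []")
      case True
      have "0 \<le> \<epsilon> * fcut \<epsilon> n (mset B + C)" using fnn[of "mset B + C"] eps by simp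
      thus ?thesis using True A by (simp add: algebra_simps)
    next
      case False
      have "1 \<le> length A" using False A by (cases D) auto
      hence npos: "0 < n" using slen[OF sA] by simp
      hence epos: "0 < e" unfolding e_def using eps by simp
      define mB where "mB = mset B"
      define mD where "mD = mset D"
      have mA: "mset A = mB + mD" unfolding mB_def mD_def A by simp
      have r1: "mB + mD + C = (mB + C) + mD" by (simp add: ac_simps)
      have "size mB + size mD = length A" unfolding mB_def mD_def A by simp
      hence nd1: "1 \<le> real (size mB) + real (size mD)" using \<open>1 \<le> length A\<close> by linarith
      have F2: "MaxCut (mB + mD + C) \<le> MaxCut (mB + C) + MaxCut mD + cut mB mD + cut mD C"
        using MaxCut_sub[of "mB + C" mD] unfolding r1 by (simp add: cut_add_left cut_comm[of C mD])
      have F4: "real (size mD) * cut mB mB \<le> 2 * real (size mB) * cut mB mD"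
        using cut_triangle[of mD mB mB] by (simp add: cut_comm[of mD mB] algebra_simps)
      have F5: "real (size mB) * cut mD C \<le> real (size C) * cut mB mD + real (size mD) * cut mB C"
        using cut_triangle[of mB mD C] by (simp add: cut_comm[of mD mB])
      have F6: "cut mB C / 2 \<le> MaxCut (mB + C)"
        using MaxCut_super[of mB C] MaxCut_nonneg[of mB] MaxCut_nonneg[of C] by linarith
      have F7: "cut (mB + mD) C / 2 \<le> MaxCut (mB + mD + C)"
        using MaxCut_super[of "mB + mD" C] MaxCut_nonneg[of "mB + mD"] MaxCut_nonneg[of C] by linarith
      have F8: "real (size C) * cut (mB + mD) (mB + mD) \<le> 2 * (real (size mB) + real (size mD)) * cut (mB + mD) C"
        using cut_triangle[of C "mB + mD" "mB + mD"] by (simp add: cut_comm[of C "mB + mD"] algebra_simps)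
      have F10a: "MaxCut (mB + mD) \<le> MaxCut (mB + mD + C)" by (rule MaxCut_mono_add)
      have F10b: "MaxCut (mB + C) \<le> MaxCut (mB + mD + C)" unfolding r1 by (rule MaxCut_mono_add)
      have H: "(1 - \<epsilon>/64) * (MaxCut (mB + mD) + (real (size mB) + real (size mD)) * e) \<le> MaxCut mB + real (size mB) * e"
        using H0 unfolding fc mA mB_def[symmetric] by simp
      have "(1 - \<epsilon>) * (MaxCut (mB + mD + C) + (real (size mB) + real (size mD) + real (size C)) * e)
            \<le> MaxCut (mB + C) + (real (size mB) + real (size C)) * e"
        by (rule core[OF refl eps epos _ _ _ nd1 MaxCut_nonneg cut_nonneg cut_nonneg cut_nonneg cut_nonneg cut_nonneg
              MaxCut_nonneg MaxCut_nonneg MaxCut_super[of mB mD] F2 MaxCut_le_half F4 F5 F6 F7 F8 MaxCut_le_half F10a F10b H])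
           auto
      thus ?thesis unfolding fc mA mB_def[symmetric] by (simp add: algebra_simps)
    qed
  qed
  show ?thesis unfolding smooth_def using c1 c2 c3 c7 eps by auto
qed

end
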